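(* Let $k$ be a field, $G$ an ordered abelian group, $K=k((G))$ with canonical valuation $v$, and $D$ a derivation on $K$ whose field of constants is $k$, such that $v$ is a differential valuation with respect to $D$. Let $S\subseteq K$ be the additive subgroup of power series without constant term (i.e. $c_0=0$). If $(K,D)$ admits asymptotic integration, then for every $b\in K$ there is a unique $s\in S$ with $Ds=b$; that is, $D|_S:S\to K$ is a bijective additive map.
   Context: For a field $k$ and ordered abelian group $G$, $k((G))$ is the field of formal sums $a=\sum_{g\in G}c_gt^g$ with $c_g\in k$ and well-ordered support $\mathrm{supp}(a)=\{g\mid c_g\neq0\}$; its canonical valuation is $va=\min\mathrm{supp}(a)$, $v0=\infty$. A derivation $D$ on a field $K$ is an additive map with $D(ab)=aDb+bDa$; its field of constants is $C=\{a\in K\mid Da=0\}$. A valuation $v$ of $K$ is a differential valuation (for $D$) if $v$ is trivial on $C$ and for all $a,b\in K$ with $va\ge0$, $vb>0$, $b\ne0$ one has $v\!\left(\frac{b\,Da}{Db}\right)>0$. $(K,D)$ admits asymptotic integration if for every $b\in K\setminus\{0\}$ there is $a\in K$ with $v(b-Da)>vb$. *)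

theory Defs
  imports Main
begin

text \<open>Hahn series k((G)): functions G \<Rightarrow> k with well-ordered support.
  'g is an ordered abelian group, 'k a field.\<close>

definition hsupp :: "('g::linordered_ab_group_add \<Rightarrow> 'k::field) \<Rightarrow> 'g set" where
  "hsupp a = {g. a g \<noteq> 0}"

definition well_ordered_set :: "'g::linorder set \<Rightarrow> bool" where
  "well_ordered_set A \<longleftrightarrow> (\<forall>B \<subseteq> A. B \<noteq> {} \<longrightarrow> (\<exists>m\<in>B. \<forall>x\<in>B. m \<le> x))"

definition hahn :: "('g::linordered_ab_group_add \<Rightarrow> 'k::field) set" where
  "hahn = {a. well_ordered_set (hsupp a)}"

definition hzero :: "'g::linordered_ab_group_add \<Rightarrow> 'k::field" where
  "hzero = (\<lambda>g. 0)"

definition hadd :: "('g::linordered_ab_group_add \<Rightarrow> 'k::field) \<Rightarrow> ('g \<Rightarrow> 'k) \<Rightarrow> ('g \<Rightarrow> 'k)" where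
  "hadd a b = (\<lambda>g. a g + b g)"

definition hminus :: "('g::linordered_ab_group_add \<Rightarrow> 'k::field) \<Rightarrow> ('g \<Rightarrow> 'k) \<Rightarrow> ('g \<Rightarrow> 'k)" where
  "hminus a b = (\<lambda>g. a g - b g)"

text \<open>Cauchy product; the index set is finite for well-ordered supports.\<close>
definition hmul :: "('g::linordered_ab_group_add \<Rightarrow> 'k::field) \<Rightarrow> ('g \<Rightarrow> 'k) \<Rightarrow> ('g \<Rightarrow> 'k)" where
  "hmul a b = (\<lambda>g. \<Sum>h\<in>{h. a h \<noteq> 0 \<and> b (g - h) \<noteq> 0}. a h * b (g - h))"

text \<open>Field division in k((G)) (for y \<noteq> 0).\<close>
definition hdiv :: "('g::linordered_ab_group_add \<Rightarrow> 'k::field) \<Rightarrow> ('g \<Rightarrow> 'k) \<Rightarrow> ('g \<Rightarrow> 'k)" where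
  "hdiv x y = (THE z. z \<in> hahn \<and> hmul z y = x)"

definition hconst :: "'k::field \<Rightarrow> ('g::linordered_ab_group_add \<Rightarrow> 'k)" where
  "hconst c = (\<lambda>g. if g = 0 then c else 0)"

text \<open>Canonical valuation v a = min supp a, for a \<noteq> 0 (v 0 = \<infinity> handled by predicates below).\<close>
definition hval :: "('g::linordered_ab_group_add \<Rightarrow> 'k::field) \<Rightarrow> 'g" where
  "hval a = (LEAST g. a g \<noteq> 0)"

text \<open>v a > v b (with v 0 = \<infinity>)\<close>
definition vgt :: "('g::linordered_ab_group_add \<Rightarrow> 'k::field) \<Rightarrow> ('g \<Rightarrow> 'k) \<Rightarrow> bool" where
  "vgt a b \<longleftrightarrow> b \<noteq> hzero \<and> (a = hzero \<or> hval b < hval a)"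

definition vpos :: "('g::linordered_ab_group_add \<Rightarrow> 'k::field) \<Rightarrow> bool" where
  "vpos a \<longleftrightarrow> a = hzero \<or> 0 < hval a"

definition vnonneg :: "('g::linordered_ab_group_add \<Rightarrow> 'k::field) \<Rightarrow> bool" where
  "vnonneg a \<longleftrightarrow> a = hzero \<or> 0 \<le> hval a"

definition is_derivation :: "(('g::linordered_ab_group_add \<Rightarrow> 'k::field) \<Rightarrow> ('g \<Rightarrow> 'k)) \<Rightarrow> bool" where
  "is_derivation D \<longleftrightarrow> (\<forall>a\<in>hahn. D a \<in> hahn) \<and>
     (\<forall>a\<in>hahn. \<forall>b\<in>hahn. D (hadd a b) = hadd (D a) (D b)) \<and>
     (\<forall>a\<in>hahn. \<forall>b\<in>hahn. D (hmul a b) = hadd (hmul a (D b)) (hmul b (D a)))"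

definition constants :: "(('g::linordered_ab_group_add \<Rightarrow> 'k::field) \<Rightarrow> ('g \<Rightarrow> 'k)) \<Rightarrow> ('g \<Rightarrow> 'k) set" where
  "constants D = {a \<in> hahn. D a = hzero}"

definition differential_valuation :: "(('g::linordered_ab_group_add \<Rightarrow> 'k::field) \<Rightarrow> ('g \<Rightarrow> 'k)) \<Rightarrow> bool" where
  "differential_valuation D \<longleftrightarrow>
     (\<forall>c\<in>constants D. c \<noteq> hzero \<longrightarrow> hval c = 0) \<and>
     (\<forall>a\<in>hahn. \<forall>b\<in>hahn. vnonneg a \<longrightarrow> b \<noteq> hzero \<longrightarrow> vpos b \<longrightarrow>
        vpos (hdiv (hmul b (D a)) (D b)))"

definition asymptotic_integration :: "(('g::linordered_ab_group_add \<Rightarrow> 'k::field) \<Rightarrow> ('g \<Rightarrow> 'k)) \<Rightarrow> bool" where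
  "asymptotic_integration D \<longleftrightarrow>
     (\<forall>b\<in>hahn. b \<noteq> hzero \<longrightarrow> (\<exists>a\<in>hahn. vgt (hminus b (D a)) b))"

end

theory Submission
  imports Defs
begin

lemma wo_subset: "well_ordered_set A \<Longrightarrow> B \<subseteq> A \<Longrightarrow> well_ordered_set B"
  unfolding well_ordered_set_def by (meson subset_trans)

lemma wo_Un:
  assumes "well_ordered_set A" "well_ordered_set B"
  shows "well_ordered_set (A \<union> B)"
  unfolding well_ordered_set_def
proof (intro allI impI)
  fix C assume C: "C \<subseteq> A \<union> B" "C \<noteq> {}"
  show "\<exists>m\<in>C. \<forall>x\<in>C. m \<le> x"
  proof (cases "C \<inter> A = {}")
    case True
    then have "C \<subseteq> B" using C by blast
    then show ?thesis using assms(2) C unfolding well_ordered_set_def by blast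
  next
    case False
    then obtain ma where ma: "ma \<in> C \<inter> A" "\<forall>x\<in>C \<inter> A. ma \<le> x"
      using assms(1) unfolding well_ordered_set_def by (meson inf_le2)
    show ?thesis
    proof (cases "C \<inter> B = {}")
      case True
      then show ?thesis using ma C by blast
    next
      case False
      then obtain mb where mb: "mb \<in> C \<inter> B" "\<forall>x\<in>C \<inter> B. mb \<le> x"
        using assms(2) unfolding well_ordered_set_def by (meson inf_le2)
      show ?thesis
      proof (cases "ma \<le> mb")
        case True
        have "\<forall>x\<in>C. ma \<le> x"
        proof
          fix x assume "x \<in> C"
          then have "x \<in> A \<or> x \<in> B" using C by blast
          then show "ma \<le> x"
          proof
            assume "x \<in> A" then show ?thesis using ma(2) \<open>x \<in> C\<close> by blast
          next
            assume "x \<in> B" then have "mb \<le> x" using mb(2) \<open>x \<in> C\<close> by blast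
            then show ?thesis using True by (rule order_trans[rotated])
          qed
        qed
        then show ?thesis using ma by blast
      next
        case False
        have "\<forall>x\<in>C. mb \<le> x"
        proof
          fix x assume "x \<in> C"
          then have "x \<in> A \<or> x \<in> B" using C by blast
          then show "mb \<le> x"
          proof
            assume "x \<in> B" then show ?thesis using mb(2) \<open>x \<in> C\<close> by blast
          next
            assume "x \<in> A" then have "ma \<le> x" using ma(2) \<open>x \<in> C\<close> by blast
            then show ?thesis using False by simp
          qed
        qed
        then show ?thesis using mb by blast
      qed
    qed
  qed
qed


lemma wo_finite: "finite (A::'a::linorder set) \<Longrightarrow> well_ordered_set A"
  unfolding well_ordered_set_def
  by (metis Min_in Min_le finite_subset)

lemma wo_no_desc:
  assumes "well_ordered_set A" "\<forall>n. f n \<in> A"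
  shows "\<exists>n. \<not> f (Suc n) < f n"
proof -
  have "range f \<subseteq> A" "range f \<noteq> {}" using assms by auto
  then obtain m where "m \<in> range f" "\<forall>x\<in>range f. m \<le> x"
    using assms(1) unfolding well_ordered_set_def by meson
  then show ?thesis by (metis not_le rangeE rangeI)
qed

lemma wo_from_no_desc:
  assumes "\<And>f. \<forall>n. f n \<in> A \<Longrightarrow> \<exists>n. \<not> f (Suc n) < f n"
  shows "well_ordered_set (A::'a::linorder set)"
  unfolding well_ordered_set_def
proof (intro allI impI, rule ccontr)
  fix B assume B: "B \<subseteq> A" "B \<noteq> {}" and nm: "\<not> (\<exists>m\<in>B. \<forall>x\<in>B. m \<le> x)"
  have st: "\<exists>y. y \<in> B \<and> y < x" if "x \<in> B" for x using nm that by (meson not_le)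
  obtain x0 where "x0 \<in> B" using B by blast
  have "\<exists>f. \<forall>n. f n \<in> B \<and> f (Suc n) < f n"
    using dependent_nat_choice[of "\<lambda>n x. x \<in> B" "\<lambda>n x y. y < x"] st \<open>x0 \<in> B\<close> by blast
  then obtain f where "\<forall>n. f n \<in> B \<and> f (Suc n) < f n" by blast
  then show False using assms[of f] B by blast
qed

lemma desc_less:
  fixes f :: "nat \<Rightarrow> 'a::order"
  assumes "\<forall>n. f (Suc n) < f n" "m < n"
  shows "f n < f m"
  using assms(2)
proof (induction n)
  case 0 then show ?case by simp
next
  case (Suc n)
  then show ?case using assms(1) by (metis less_Suc_eq order.strict_trans)
qed

lemma wo_subseq:
  fixes a :: "nat \<Rightarrow> 'a::linorder"
  assumes "well_ordered_set A" "\<forall>n. a n \<in> A"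
  shows "\<exists>\<sigma>. (\<forall>n. \<sigma> n < \<sigma> (Suc n) \<and> a (\<sigma> n) \<le> a (\<sigma> (Suc n)))"
proof -
  have mn: "\<exists>i\<ge>k. \<forall>j\<ge>k. a i \<le> a j" for k
  proof -
    have "a ` {k..} \<subseteq> A" "a ` {k..} \<noteq> {}" using assms by auto
    then obtain m where "m \<in> a ` {k..}" "\<forall>x\<in>a ` {k..}. m \<le> x"
      using assms(1) unfolding well_ordered_set_def by blast
    then show ?thesis by auto
  qed
  have "\<exists>\<sigma>. \<forall>n. (\<forall>j\<ge>\<sigma> n. a (\<sigma> n) \<le> a j) \<and> \<sigma> n < \<sigma> (Suc n)"
  proof (rule dependent_nat_choice)
    show "\<exists>x. \<forall>j\<ge>x. a x \<le> a j" using mn[of 0] by auto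
  next
    fix x n assume "\<forall>j\<ge>x. a x \<le> a j"
    obtain i where "i \<ge> Suc x" "\<forall>j\<ge>Suc x. a i \<le> a j" using mn[of "Suc x"] by blast
    then show "\<exists>y. (\<forall>j\<ge>y. a y \<le> a j) \<and> x < y"
      by (intro exI[of _ i]) auto
  qed
  then show ?thesis by (meson less_imp_le)
qed

lemma wo_plus:
  fixes A B :: "'g::linordered_ab_group_add set"
  assumes "well_ordered_set A" "well_ordered_set B"
  shows "well_ordered_set {x + y | x y. x \<in> A \<and> y \<in> B}"
proof (rule wo_from_no_desc, rule ccontr)
  fix f assume f: "\<forall>n. f n \<in> {x + y | x y. x \<in> A \<and> y \<in> B}" and nd: "\<not> (\<exists>n. \<not> f (Suc n) < f n)"
  have "\<forall>n. \<exists>p. fst p \<in> A \<and> snd p \<in> B \<and> f n = fst p + snd p" using f by force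
  then obtain p where p: "\<And>n. fst (p n) \<in> A \<and> snd (p n) \<in> B \<and> f n = fst (p n) + snd (p n)"
    by metis
  define a where "a n = fst (p n)" for n
  define b where "b n = snd (p n)" for n
  have ab: "a n \<in> A" "b n \<in> B" "f n = a n + b n" for n using p a_def b_def by auto
  obtain \<sigma> where \<sigma>: "\<forall>n. \<sigma> n < \<sigma> (Suc n) \<and> a (\<sigma> n) \<le> a (\<sigma> (Suc n))"
    using wo_subseq[OF assms(1)] ab by blast
  have dec: "\<forall>n. f (Suc n) < f n" using nd by blast
  have "b (\<sigma> (Suc n)) < b (\<sigma> n)" for n
  proof (rule ccontr)
    assume "\<not> b (\<sigma> (Suc n)) < b (\<sigma> n)"
    then have "b (\<sigma> n) \<le> b (\<sigma> (Suc n))" by simp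
    then have "f (\<sigma> n) \<le> f (\<sigma> (Suc n))" using \<sigma> ab by (simp add: add_mono)
    moreover have "f (\<sigma> (Suc n)) < f (\<sigma> n)" using desc_less[OF dec] \<sigma> by blast
    ultimately show False by simp
  qed
  then show False using wo_no_desc[OF assms(2), of "\<lambda>n. b (\<sigma> n)"] ab by blast
qed

lemma wo_antichain_finite:
  fixes A B :: "'g::linordered_ab_group_add set"
  assumes "well_ordered_set A" "well_ordered_set B"
  shows "finite {h. h \<in> A \<and> g - h \<in> B}"
proof (rule ccontr)
  define H where "H = {h. h \<in> A \<and> g - h \<in> B}"
  assume "infinite {h. h \<in> A \<and> g - h \<in> B}"
  then have inf: "infinite H" using H_def by simp
  have "H \<subseteq> A" unfolding H_def by blast
  then have woH: "well_ordered_set H" using assms(1) wo_subset by blast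
  have mnH: "\<exists>m\<in>X. \<forall>x\<in>X. m \<le> x" if "X \<subseteq> H" "infinite X" for X
  proof -
    have "X \<noteq> {}" using that(2) by auto
    then show ?thesis using woH that(1) unfolding well_ordered_set_def by blast
  qed
  have "\<exists>f. \<forall>n. (f n \<in> H \<and> infinite {y\<in>H. f n < y}) \<and> f n < f (Suc n)"
  proof (rule dependent_nat_choice)
    obtain m where m: "m \<in> H" "\<forall>x\<in>H. m \<le> x" using mnH[of H] inf by blast
    have "{y\<in>H. m < y} = H - {m}" using m by force
    then show "\<exists>x. x \<in> H \<and> infinite {y \<in> H. x < y}" using m inf by auto
  next
    fix x n assume x: "x \<in> H \<and> infinite {y \<in> H. x < y}"
    obtain m where m: "m \<in> {y \<in> H. x < y}" "\<forall>z\<in>{y \<in> H. x < y}. m \<le> z"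
      using mnH[of "{y \<in> H. x < y}"] x by blast
    have "{y\<in>H. m < y} = {y \<in> H. x < y} - {m}" using m by force
    then show "\<exists>y. (y \<in> H \<and> infinite {z \<in> H. y < z}) \<and> x < y" using m x by auto
  qed
  then obtain f where f: "\<forall>n. f n \<in> H \<and> f n < f (Suc n)" by blast
  have "\<forall>n. g - f n \<in> B" using f H_def by auto
  moreover have "\<forall>n. g - f (Suc n) < g - f n" using f by (simp add: diff_strict_left_mono)
  ultimately show False using wo_no_desc[OF assms(2), of "\<lambda>n. g - f n"] by blast
qed


lemma hahn_iff: "a \<in> hahn \<longleftrightarrow> well_ordered_set {g. a g \<noteq> 0}"
  unfolding hahn_def hsupp_def by simp

lemma nz_iff: "a \<noteq> hzero \<longleftrightarrow> (\<exists>g. a g \<noteq> 0)"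
  unfolding hzero_def by (auto simp: fun_eq_iff)

lemma hzero_app[simp]: "hzero g = 0"
  unfolding hzero_def by simp

lemma hadd_app[simp]: "hadd a b g = a g + b g"
  unfolding hadd_def by simp

lemma hminus_app[simp]: "hminus a b g = a g - b g"
  unfolding hminus_def by simp

lemma hzero_hahn[simp]: "hzero \<in> hahn"
  unfolding hahn_iff hzero_def by (simp add: wo_finite)

lemma hadd_hahn: "a \<in> hahn \<Longrightarrow> b \<in> hahn \<Longrightarrow> hadd a b \<in> hahn"
  unfolding hahn_iff
  by (rule wo_subset[OF wo_Un], assumption, assumption) auto

lemma hminus_hahn: "a \<in> hahn \<Longrightarrow> b \<in> hahn \<Longrightarrow> hminus a b \<in> hahn"
  unfolding hahn_iff
  by (rule wo_subset[OF wo_Un], assumption, assumption) auto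

lemma mono_hahn: "(\<lambda>g. if g = \<gamma> then c else 0) \<in> hahn"
proof -
  have "{g. (if g = \<gamma> then c else 0) \<noteq> 0} \<subseteq> {\<gamma>}" by auto
  then show ?thesis unfolding hahn_iff by (meson finite.emptyI finite_insert finite_subset wo_finite)
qed

lemma hconst_eq: "hconst c = (\<lambda>g. if g = 0 then c else 0)"
  unfolding hconst_def by simp

lemma hconst_hahn: "hconst c \<in> hahn"
  unfolding hconst_eq by (rule mono_hahn)

lemma hval_eqI:
  assumes "a g \<noteq> 0" "\<And>h. h < g \<Longrightarrow> a h = 0"
  shows "hval a = g"
  unfolding hval_def
proof (rule Least_equality)
  show "a g \<noteq> 0" by fact
  show "\<And>y. a y \<noteq> 0 \<Longrightarrow> g \<le> y" using assms(2) by (meson not_le)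
qed

lemma hval_props:
  assumes "a \<in> hahn" "a \<noteq> hzero"
  shows "a (hval a) \<noteq> 0" "\<And>g. a g \<noteq> 0 \<Longrightarrow> hval a \<le> g"
proof -
  have ne: "{g. a g \<noteq> 0} \<noteq> {}" using assms(2) nz_iff by auto
  have "well_ordered_set {g. a g \<noteq> 0}" using assms(1) hahn_iff by auto
  then obtain m where m: "m \<in> {g. a g \<noteq> 0}" "\<forall>x\<in>{g. a g \<noteq> 0}. m \<le> x"
    using ne unfolding well_ordered_set_def by (meson order_refl)
  have "hval a = m" using m by (intro hval_eqI) (auto simp: not_le[symmetric])
  then show "a (hval a) \<noteq> 0" "\<And>g. a g \<noteq> 0 \<Longrightarrow> hval a \<le> g" using m by auto
qed

lemma below_hval: "a \<in> hahn \<Longrightarrow> g < hval a \<Longrightarrow> a g = 0"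
  by (metis hval_props(2) hzero_app not_le)

lemma vgt_iff:
  assumes "a \<in> hahn" "c \<in> hahn" "c \<noteq> hzero"
  shows "vgt a c \<longleftrightarrow> (\<forall>g \<le> hval c. a g = 0)"
proof
  assume "vgt a c"
  then have "a = hzero \<or> hval c < hval a" unfolding vgt_def by simp
  then show "\<forall>g \<le> hval c. a g = 0"
    using below_hval[OF assms(1)] by (metis hzero_app le_less_trans)
next
  assume H: "\<forall>g \<le> hval c. a g = 0"
  show "vgt a c" unfolding vgt_def
  proof (cases "a = hzero")
    case False
    then have "a (hval a) \<noteq> 0" using hval_props assms by blast
    then have "hval c < hval a" using H by (meson not_le)
    then show "c \<noteq> hzero \<and> (a = hzero \<or> hval c < hval a)" using assms by simp
  qed (use assms in simp)
qed

lemma vgt_trans: "vgt a b \<Longrightarrow> vgt b c \<Longrightarrow> vgt a c"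
  unfolding vgt_def by auto

lemma vgt_irrefl: "\<not> vgt a a"
  unfolding vgt_def by auto

lemma vgt_nz: "vgt a c \<Longrightarrow> c \<noteq> hzero"
  unfolding vgt_def by auto

lemma vgt_zero: "c \<noteq> hzero \<Longrightarrow> vgt hzero c"
  unfolding vgt_def by auto

lemma vgt_cong: "vgt a c \<Longrightarrow> c' \<noteq> hzero \<Longrightarrow> hval c' = hval c \<Longrightarrow> vgt a c'"
  unfolding vgt_def by auto

lemma vgt_hadd:
  assumes "a \<in> hahn" "b \<in> hahn" "c \<in> hahn" "vgt a c" "vgt b c"
  shows "vgt (hadd a b) c"
proof -
  have c: "c \<noteq> hzero" using assms(4) vgt_nz by blast
  have "hadd a b \<in> hahn" using assms hadd_hahn by blast
  then show ?thesis using assms vgt_iff[OF _ assms(3) c] by simp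
qed

lemma vgt_hminus:
  assumes "a \<in> hahn" "b \<in> hahn" "c \<in> hahn" "vgt a c" "vgt b c"
  shows "vgt (hminus a b) c"
proof -
  have c: "c \<noteq> hzero" using assms(4) vgt_nz by blast
  have "hminus a b \<in> hahn" using assms hminus_hahn by blast
  then show ?thesis using assms vgt_iff[OF _ assms(3) c] by simp
qed

lemma hval_hminus_vgt:
  assumes "a \<in> hahn" "a' \<in> hahn" "vgt a' a"
  shows "hminus a a' \<noteq> hzero" "hval (hminus a a') = hval a"
proof -
  have a: "a \<noteq> hzero" using assms(3) vgt_nz by blast
  have z: "\<forall>g \<le> hval a. a' g = 0" using vgt_iff[OF assms(2,1) a] assms(3) by simp
  have "hminus a a' (hval a) \<noteq> 0" using z hval_props[OF assms(1) a] by simp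
  moreover have "\<And>h. h < hval a \<Longrightarrow> hminus a a' h = 0"
    using z below_hval[OF assms(1)] by simp
  ultimately show "hminus a a' \<noteq> hzero" "hval (hminus a a') = hval a"
    using hval_eqI nz_iff by blast+
qed

lemma hval_hadd_vgt:
  assumes "a \<in> hahn" "a' \<in> hahn" "vgt a' a"
  shows "hadd a a' \<noteq> hzero" "hval (hadd a a') = hval a"
proof -
  have a: "a \<noteq> hzero" using assms(3) vgt_nz by blast
  have z: "\<forall>g \<le> hval a. a' g = 0" using vgt_iff[OF assms(2,1) a] assms(3) by simp
  have "hadd a a' (hval a) \<noteq> 0" using z hval_props[OF assms(1) a] by simp
  moreover have "\<And>h. h < hval a \<Longrightarrow> hadd a a' h = 0"
    using z below_hval[OF assms(1)] by simp
  ultimately show "hadd a a' \<noteq> hzero" "hval (hadd a a') = hval a"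
    using hval_eqI nz_iff by blast+
qed


lemma hmul_eq_sum:
  assumes "finite F" "{h. a h \<noteq> 0 \<and> b (g - h) \<noteq> 0} \<subseteq> F"
  shows "hmul a b g = (\<Sum>h\<in>F. a h * b (g - h))"
  unfolding hmul_def
  by (rule sum.mono_neutral_left[OF assms]) auto

lemma hmul_fin:
  assumes "a \<in> hahn" "b \<in> hahn"
  shows "finite {h. a h \<noteq> 0 \<and> b (g - h) \<noteq> 0}"
proof -
  have "finite {h. h \<in> {x. a x \<noteq> 0} \<and> g - h \<in> {x. b x \<noteq> 0}}"
    using assms by (intro wo_antichain_finite) (auto simp: hahn_iff)
  then show ?thesis by simp
qed

lemma hmul_hahn:
  assumes "a \<in> hahn" "b \<in> hahn"
  shows "hmul a b \<in> hahn"
proof -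
  have "{g. hmul a b g \<noteq> 0} \<subseteq> {x + y | x y. x \<in> {x. a x \<noteq> 0} \<and> y \<in> {x. b x \<noteq> 0}}"
  proof
    fix g assume "g \<in> {g. hmul a b g \<noteq> 0}"
    then have "{h. a h \<noteq> 0 \<and> b (g - h) \<noteq> 0} \<noteq> {}" unfolding hmul_def by force
    then obtain h where "a h \<noteq> 0" "b (g - h) \<noteq> 0" by blast
    then show "g \<in> {x + y | x y. x \<in> {x. a x \<noteq> 0} \<and> y \<in> {x. b x \<noteq> 0}}"
      by (intro CollectI exI[of _ h] exI[of _ "g - h"]) auto
  qed
  moreover have "well_ordered_set {x + y | x y. x \<in> {x. a x \<noteq> 0} \<and> y \<in> {x. b x \<noteq> 0}}"
    using assms by (intro wo_plus) (auto simp: hahn_iff)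
  ultimately show ?thesis unfolding hahn_iff using wo_subset by blast
qed

lemma hmul_comm: "hmul a b = hmul b a"
proof (rule ext)
  fix g
  show "hmul a b g = hmul b a g"
    unfolding hmul_def
    by (rule sum.reindex_bij_witness[of _ "\<lambda>h. g - h" "\<lambda>h. g - h"]) (auto simp: mult.commute)
qed

lemma hmul_hadd_left:
  assumes "a \<in> hahn" "a' \<in> hahn" "b \<in> hahn"
  shows "hmul (hadd a a') b = hadd (hmul a b) (hmul a' b)"
proof (rule ext)
  fix g
  define F where "F = {h. a h \<noteq> 0 \<and> b (g - h) \<noteq> 0} \<union> {h. a' h \<noteq> 0 \<and> b (g - h) \<noteq> 0}"
  have F: "finite F" unfolding F_def using hmul_fin assms by blast
  have "hmul (hadd a a') b g = (\<Sum>h\<in>F. hadd a a' h * b (g - h))"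
    by (rule hmul_eq_sum[OF F]) (auto simp: F_def)
  also have "\<dots> = (\<Sum>h\<in>F. a h * b (g - h)) + (\<Sum>h\<in>F. a' h * b (g - h))"
    by (simp add: distrib_right sum.distrib)
  also have "\<dots> = hmul a b g + hmul a' b g"
    by (subst (1 2) hmul_eq_sum[OF F]) (auto simp: F_def)
  finally show "hmul (hadd a a') b g = hadd (hmul a b) (hmul a' b) g" by simp
qed

lemma hmul_hminus_left:
  assumes "a \<in> hahn" "a' \<in> hahn" "b \<in> hahn"
  shows "hmul (hminus a a') b = hminus (hmul a b) (hmul a' b)"
proof (rule ext)
  fix g
  define F where "F = {h. a h \<noteq> 0 \<and> b (g - h) \<noteq> 0} \<union> {h. a' h \<noteq> 0 \<and> b (g - h) \<noteq> 0}"
  have F: "finite F" unfolding F_def using hmul_fin assms by blast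
  have "hmul (hminus a a') b g = (\<Sum>h\<in>F. hminus a a' h * b (g - h))"
    by (rule hmul_eq_sum[OF F]) (auto simp: F_def)
  also have "\<dots> = (\<Sum>h\<in>F. a h * b (g - h)) - (\<Sum>h\<in>F. a' h * b (g - h))"
    by (simp add: left_diff_distrib sum_subtractf)
  also have "\<dots> = hmul a b g - hmul a' b g"
    by (subst (1 2) hmul_eq_sum[OF F]) (auto simp: F_def)
  finally show "hmul (hminus a a') b g = hminus (hmul a b) (hmul a' b) g" by simp
qed

lemma hmul_zero_left[simp]: "hmul hzero b = hzero"
  unfolding hmul_def hzero_def by simp

lemma hmul_zero_right[simp]: "hmul a hzero = hzero"
  unfolding hmul_def hzero_def by simp

lemma hmul_mono: "hmul (\<lambda>g. if g = \<gamma> then c else 0) y = (\<lambda>g. c * y (g - \<gamma>))"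
proof (rule ext)
  fix g
  have "hmul (\<lambda>g. if g = \<gamma> then c else 0) y g = (\<Sum>h\<in>{\<gamma>}. (if h = \<gamma> then c else 0) * y (g - h))"
    by (rule hmul_eq_sum) auto
  then show "hmul (\<lambda>g. if g = \<gamma> then c else 0) y g = c * y (g - \<gamma>)" by simp
qed

lemma hmul_hconst: "hmul (hconst c) y = (\<lambda>g. c * y g)"
  unfolding hconst_eq hmul_mono by simp

lemma hmul_val:
  assumes "a \<in> hahn" "b \<in> hahn" "a \<noteq> hzero" "b \<noteq> hzero"
  shows "hmul a b \<noteq> hzero" "hval (hmul a b) = hval a + hval b"
proof -
  let ?va = "hval a" and ?vb = "hval b"
  have pa: "a ?va \<noteq> 0" "\<And>g. a g \<noteq> 0 \<Longrightarrow> ?va \<le> g" using hval_props assms by blast+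
  have pb: "b ?vb \<noteq> 0" "\<And>g. b g \<noteq> 0 \<Longrightarrow> ?vb \<le> g" using hval_props assms by blast+
  have "{h. a h \<noteq> 0 \<and> b (?va + ?vb - h) \<noteq> 0} \<subseteq> {?va}"
  proof
    fix h assume "h \<in> {h. a h \<noteq> 0 \<and> b (?va + ?vb - h) \<noteq> 0}"
    then have "?va \<le> h" "?vb \<le> ?va + ?vb - h" using pa pb by auto
    then have "h = ?va" by (simp add: le_diff_eq add.commute)
    then show "h \<in> {?va}" by simp
  qed
  then have "hmul a b (?va + ?vb) = (\<Sum>h\<in>{?va}. a h * b (?va + ?vb - h))"
    by (intro hmul_eq_sum) auto
  then have c: "hmul a b (?va + ?vb) \<noteq> 0" using pa pb by simp
  have z: "hmul a b g = 0" if "g < ?va + ?vb" for g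
  proof -
    have "{h. a h \<noteq> 0 \<and> b (g - h) \<noteq> 0} \<subseteq> {}"
    proof
      fix h assume "h \<in> {h. a h \<noteq> 0 \<and> b (g - h) \<noteq> 0}"
      then have "?va \<le> h" "?vb \<le> g - h" using pa pb by auto
      then have "?va + ?vb \<le> g" by (metis add_mono add.commute diff_add_cancel)
      then show "h \<in> {}" using that by simp
    qed
    then show ?thesis by (subst hmul_eq_sum[of "{}"]) auto
  qed
  show "hmul a b \<noteq> hzero" using c nz_iff by blast
  show "hval (hmul a b) = ?va + ?vb" using c z by (rule hval_eqI)
qed


lemma approx_solve:
  fixes L :: "('g::linordered_ab_group_add \<Rightarrow> 'k::field) \<Rightarrow> ('g \<Rightarrow> 'k)"
  assumes T_hahn: "T \<subseteq> hahn"
    and T0: "hzero \<in> T"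
    and Tadd: "\<And>x y. x \<in> T \<Longrightarrow> y \<in> T \<Longrightarrow> hadd x y \<in> T"
    and Tmin: "\<And>x y. x \<in> T \<Longrightarrow> y \<in> T \<Longrightarrow> hminus x y \<in> T"
    and Tlim: "\<And>f. f \<in> hahn \<Longrightarrow> (\<And>g. f g \<noteq> 0 \<Longrightarrow> \<exists>z\<in>T. f g = z g) \<Longrightarrow> f \<in> T"
    and Lhahn: "\<And>x. x \<in> T \<Longrightarrow> L x \<in> hahn"
    and Ladd: "\<And>x y. x \<in> T \<Longrightarrow> y \<in> T \<Longrightarrow> L (hadd x y) = hadd (L x) (L y)"
    and Lstrict: "\<And>x y. x \<in> T \<Longrightarrow> y \<in> T \<Longrightarrow> vgt y x \<Longrightarrow> vgt (L y) (L x)"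
    and Lweak: "\<And>x y. x \<in> T \<Longrightarrow> y \<in> T \<Longrightarrow> x \<noteq> hzero \<Longrightarrow> y \<noteq> hzero \<Longrightarrow>
                   hval x \<le> hval y \<Longrightarrow> hval (L x) \<le> hval (L y)"
    and b: "b \<in> hahn"
    and step: "\<And>z. z \<in> T \<Longrightarrow> hminus b (L z) \<noteq> hzero \<Longrightarrow>
                 \<exists>d\<in>T. vgt (hminus (hminus b (L z)) (L d)) (hminus b (L z))"
  shows "\<exists>z\<in>T. L z = b"
proof -
  define E where "E z = hminus b (L z)" for z
  have Lminus: "L (hminus x y) = hminus (L x) (L y)" if "x \<in> T" "y \<in> T" for x y
  proof -
    have "hadd (hminus x y) y = x" by (rule ext) simp
    then have "L x = hadd (L (hminus x y)) (L y)" using Ladd[of "hminus x y" y] Tmin that by simp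
    then show ?thesis by (intro ext) (simp add: fun_eq_iff eq_diff_eq)
  qed
  have Ehahn: "E z \<in> hahn" if "z \<in> T" for z
    unfolding E_def using hminus_hahn[OF b Lhahn[OF that]] .
  have Ediff: "L (hminus w z) = hminus (E z) (E w)" if "z \<in> T" "w \<in> T" for z w
    using Lminus[OF that(2,1)] unfolding E_def by (intro ext) (simp add: algebra_simps)
  have Eadd: "E (hadd z d) = hminus (E z) (L d)" if "z \<in> T" "d \<in> T" for z d
    using Ladd[OF that] unfolding E_def by (intro ext) (simp add: algebra_simps)
  have Tsub: "x \<in> hahn" if "x \<in> T" for x using T_hahn that by blast
  define r where "r = {(x, y). x \<in> T \<and> y \<in> T \<and> (x = y \<or> vgt (E y) (E x))}"
  have Fr: "Field r = T"
  proof
    show "Field r \<subseteq> T" unfolding r_def Field_def by auto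
    show "T \<subseteq> Field r" unfolding r_def Field_def by auto
  qed
  have po: "Partial_order r"
    unfolding partial_order_on_def preorder_on_def Fr
  proof (intro conjI)
    show "r \<subseteq> T \<times> T" unfolding r_def by auto
    show "refl_on T r" unfolding r_def refl_on_def by auto
    show "trans r" unfolding r_def trans_def using vgt_trans by fast
    show "antisym r" unfolding r_def antisym_def using vgt_trans vgt_irrefl by fast
  qed
  have ub: "\<exists>u\<in>Field r. \<forall>a\<in>C. (a, u) \<in> r" if C: "C \<in> Chains r" for C
  proof -
    have CT: "C \<subseteq> T" using C unfolding Chains_def r_def by fast
    have comp: "z = w \<or> vgt (E w) (E z) \<or> vgt (E z) (E w)" if "z \<in> C" "w \<in> C" for z w
      using C that unfolding Chains_def r_def by fast
    show ?thesis
    proof (cases "\<exists>u\<in>C. \<forall>a\<in>C. (a, u) \<in> r")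
      case True
      then obtain u where u: "u \<in> C" "\<forall>a\<in>C. (a, u) \<in> r" by blast
      show ?thesis unfolding Fr using CT u by (intro bexI[of _ u]) auto
    next
      case False
      have nomax: "\<exists>w\<in>C. vgt (E w) (E z)" if "z \<in> C" for z
      proof -
        have "\<not> (\<forall>a\<in>C. (a, z) \<in> r)" using False that by auto
        then obtain a where "a \<in> C" "(a, z) \<notin> r" by auto
        then show ?thesis using comp[OF that \<open>a \<in> C\<close>] CT that unfolding r_def by blast
      qed
      define succ where "succ z = (SOME w. w \<in> C \<and> vgt (E w) (E z))" for z
      have succ: "succ z \<in> C" "vgt (E (succ z)) (E z)" if "z \<in> C" for z
        using someI_ex[OF nomax[OF that, unfolded Bex_def]] unfolding succ_def by blast+
      define \<gamma> where "\<gamma> z = hval (hminus (succ z) z)" for z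
      have K0: "hminus w z \<noteq> hzero \<and> L (hminus w z) \<noteq> hzero \<and> hval (L (hminus w z)) = hval (E z)"
        if "z \<in> C" "w \<in> C" "vgt (E w) (E z)" for z w
      proof -
        have zw: "z \<in> T" "w \<in> T" using that CT by auto
        have "hminus (E z) (E w) \<noteq> hzero" "hval (hminus (E z) (E w)) = hval (E z)"
          using hval_hminus_vgt[OF Ehahn Ehahn that(3)] zw by auto
        moreover have "hminus w z \<noteq> hzero"
        proof
          assume "hminus w z = hzero"
          then have "w = z" by (simp add: fun_eq_iff nz_iff)
          then show False using that(3) vgt_irrefl by blast
        qed
        ultimately show ?thesis using Ediff[OF zw] by simp
      qed
      have K1: "hval (hminus w z) = \<gamma> z" if "z \<in> C" "w \<in> C" "vgt (E w) (E z)" for z w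
      proof -
        define w' where "w' = succ z"
        have w': "w' \<in> C" "vgt (E w') (E z)" using succ that w'_def by auto
        have T4: "hminus w z \<in> T" "hminus w' z \<in> T" using that w' CT Tmin by auto
        have A: "hminus w z \<noteq> hzero" "L (hminus w z) \<noteq> hzero" "hval (L (hminus w z)) = hval (E z)"
          using K0[OF that] by auto
        have B: "hminus w' z \<noteq> hzero" "L (hminus w' z) \<noteq> hzero" "hval (L (hminus w' z)) = hval (E z)"
          using K0[OF that(1) w'] by auto
        have "\<not> hval (hminus w z) < hval (hminus w' z)"
        proof
          assume "hval (hminus w z) < hval (hminus w' z)"
          then have "vgt (hminus w' z) (hminus w z)" using A unfolding vgt_def by simp
          then have "vgt (L (hminus w' z)) (L (hminus w z))" using Lstrict T4 by blast
          then show False using A B unfolding vgt_def by simp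
        qed
        moreover have "\<not> hval (hminus w' z) < hval (hminus w z)"
        proof
          assume "hval (hminus w' z) < hval (hminus w z)"
          then have "vgt (hminus w z) (hminus w' z)" using B unfolding vgt_def by simp
          then have "vgt (L (hminus w z)) (L (hminus w' z))" using Lstrict T4 by blast
          then show False using A B unfolding vgt_def by simp
        qed
        ultimately show ?thesis unfolding \<gamma>_def w'_def[symmetric] by simp
      qed
      have K2: "\<gamma> z < \<gamma> w" if "z \<in> C" "w \<in> C" "vgt (E w) (E z)" for z w
      proof (rule ccontr)
        assume "\<not> \<gamma> z < \<gamma> w"
        then have le: "\<gamma> w \<le> \<gamma> z" by simp
        define w' where "w' = succ w"
        have w': "w' \<in> C" "vgt (E w') (E w)" using succ that w'_def by auto
        have h1: "hval (hminus w' w) = \<gamma> w" using K1[OF that(2) w'] .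
        have h2: "hval (hminus w z) = \<gamma> z" using K1[OF that] .
        have A: "hminus w' w \<noteq> hzero" "hval (L (hminus w' w)) = hval (E w)"
          using K0[OF that(2) w'] by auto
        have B: "hminus w z \<noteq> hzero" "hval (L (hminus w z)) = hval (E z)"
          using K0[OF that] by auto
        have "hval (L (hminus w' w)) \<le> hval (L (hminus w z))"
          using Lweak[of "hminus w' w" "hminus w z"] A B h1 h2 le Tmin CT that w' by auto
        then have "hval (E w) \<le> hval (E z)" using A B by simp
        moreover have "E w \<noteq> hzero" using w'(2) vgt_nz by blast
        ultimately show False using that(3) unfolding vgt_def using leD by blast
      qed
      have K3: "w g = z g" if "z \<in> C" "w \<in> C" "vgt (E w) (E z)" "g < \<gamma> z" for z w g
      proof -
        have "hminus w z \<in> hahn" using that CT Tmin Tsub by blast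
        then have "hminus w z g = 0" using below_hval K1[OF that(1-3)] that(4) by metis
        then show ?thesis by simp
      qed
      have K4: "z g = w g" if "z \<in> C" "w \<in> C" "g < \<gamma> z" "g < \<gamma> w" for z w g
        using comp[OF that(1,2)] K3 that by metis
      define zs where "zs g = (if \<exists>z\<in>C. g < \<gamma> z then (SOME z. z \<in> C \<and> g < \<gamma> z) g else 0)" for g
      have zs_eq: "zs g = z g" if "z \<in> C" "g < \<gamma> z" for z g
      proof -
        have ex: "\<exists>z. z \<in> C \<and> g < \<gamma> z" using that by blast
        have "(SOME z. z \<in> C \<and> g < \<gamma> z) \<in> C \<and> g < \<gamma> (SOME z. z \<in> C \<and> g < \<gamma> z)"
          using someI_ex[OF ex] .
        then show ?thesis unfolding zs_def using that K4 by (metis (no_types, lifting))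
      qed
      have zs_nz: "\<exists>z\<in>C. g < \<gamma> z \<and> zs g = z g" if "zs g \<noteq> 0" for g
        using that zs_eq unfolding zs_def by (metis (no_types, lifting))
      have zs_hahn: "zs \<in> hahn"
        unfolding hahn_iff well_ordered_set_def
      proof (intro allI impI)
        fix B assume B: "B \<subseteq> {g. zs g \<noteq> 0}" "B \<noteq> {}"
        obtain x where x: "x \<in> B" using B by blast
        then obtain z where z: "z \<in> C" "x < \<gamma> z" using zs_nz B by blast
        define B' where "B' = {y \<in> B. y < \<gamma> z}"
        have "B' \<subseteq> {g. z g \<noteq> 0}" unfolding B'_def using B zs_eq z by auto
        moreover have "B' \<noteq> {}" using x z B'_def by auto
        moreover have "well_ordered_set {g. z g \<noteq> 0}" using z CT Tsub hahn_iff by blast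
        ultimately obtain m where m: "m \<in> B'" "\<forall>y\<in>B'. m \<le> y"
          unfolding well_ordered_set_def by meson
        have "\<forall>y\<in>B. m \<le> y"
        proof
          fix y assume "y \<in> B"
          show "m \<le> y"
          proof (cases "y < \<gamma> z")
            case True then show ?thesis using m \<open>y \<in> B\<close> B'_def by auto
          next
            case False then show ?thesis using m B'_def by auto
          qed
        qed
        then show "\<exists>m\<in>B. \<forall>x\<in>B. m \<le> x" using m B'_def by auto
      qed
      have zsT: "zs \<in> T"
        using Tlim[OF zs_hahn] zs_nz CT by blast
      have "vgt (E zs) (E z)" if z: "z \<in> C" for z
      proof -
        define w where "w = succ z"
        have w: "w \<in> C" "vgt (E w) (E z)" using succ z w_def by auto
        have wT: "w \<in> T" "z \<in> T" using w z CT by auto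
        define d where "d = hminus zs w"
        have dT: "d \<in> T" using Tmin zsT wT d_def by blast
        define x where "x = hminus w z"
        have xT: "x \<in> T" using Tmin wT x_def by blast
        have x: "x \<noteq> hzero" "L x \<noteq> hzero" "hval (L x) = hval (E z)"
          using K0[OF z w] x_def by auto
        have hx: "hval x = \<gamma> z" using K1[OF z w] x_def by simp
        have "\<gamma> z < \<gamma> w" using K2[OF z w] .
        then have "\<forall>g \<le> hval x. d g = 0"
          using hx zs_eq[OF w(1)] d_def by auto
        then have "vgt d x" using vgt_iff[of d x] dT xT Tsub x by blast
        then have "vgt (L d) (L x)" using Lstrict xT dT by blast
        moreover have "E z \<noteq> hzero" using w(2) vgt_nz by blast
        ultimately have v1: "vgt (L d) (E z)" using vgt_cong[of "L d" "L x" "E z"] x by simp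
        have "E zs = hminus (E w) (L d)"
          using Lminus[OF zsT wT(1)] unfolding d_def E_def by (intro ext) (simp add: algebra_simps)
        moreover have "vgt (hminus (E w) (L d)) (E z)"
          using vgt_hminus[OF Ehahn[OF wT(1)] Lhahn[OF dT] Ehahn[OF wT(2)] w(2) v1] .
        ultimately show ?thesis by simp
      qed
      then have "\<forall>a\<in>C. (a, zs) \<in> r" unfolding r_def using CT zsT by blast
      then show ?thesis using zsT unfolding Fr by blast
    qed
  qed
  obtain m where m: "m \<in> T" "\<forall>a\<in>T. (m, a) \<in> r \<longrightarrow> a = m"
    using Zorns_po_lemma[OF po ub] Fr by auto
  have "E m = hzero"
  proof (rule ccontr)
    assume ne: "E m \<noteq> hzero"
    obtain d where d: "d \<in> T" "vgt (hminus (E m) (L d)) (E m)"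
      using step[OF m(1)] ne unfolding E_def by blast
    have m'T: "hadd m d \<in> T" using Tadd m(1) d(1) by blast
    have "E (hadd m d) = hminus (E m) (L d)" using Eadd m(1) d(1) by blast
    then have "(m, hadd m d) \<in> r" unfolding r_def using m(1) m'T d(2) by simp
    then have "hadd m d = m" using m m'T by blast
    then show False using d(2) \<open>E (hadd m d) = hminus (E m) (L d)\<close> vgt_irrefl by metis
  qed
  then have "L m = b" unfolding E_def by (simp add: fun_eq_iff)
  then show ?thesis using m(1) by blast
qed


lemma hdiv_exists:
  fixes x y :: "'g::linordered_ab_group_add \<Rightarrow> 'k::field"
  assumes x: "x \<in> hahn" and y: "y \<in> hahn" "y \<noteq> hzero"
  shows "\<exists>z\<in>hahn. hmul z y = x"
proof (rule approx_solve[where T = hahn and L = "\<lambda>z. hmul z y"])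
  show "hahn \<subseteq> hahn" by simp
  show "hzero \<in> hahn" by simp
  show "\<And>a b. a \<in> hahn \<Longrightarrow> b \<in> hahn \<Longrightarrow> hadd a b \<in> hahn" by (rule hadd_hahn)
  show "\<And>a b. a \<in> hahn \<Longrightarrow> b \<in> hahn \<Longrightarrow> hminus a b \<in> hahn" by (rule hminus_hahn)
  show "\<And>f. f \<in> hahn \<Longrightarrow> (\<And>g. f g \<noteq> 0 \<Longrightarrow> \<exists>z\<in>hahn. f g = z g) \<Longrightarrow> f \<in> hahn" by simp
  show "\<And>a. a \<in> hahn \<Longrightarrow> hmul a y \<in> hahn" using hmul_hahn y by blast
  show "\<And>a b. a \<in> hahn \<Longrightarrow> b \<in> hahn \<Longrightarrow> hmul (hadd a b) y = hadd (hmul a y) (hmul b y)"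
    using hmul_hadd_left y by blast
  show "vgt (hmul b y) (hmul a y)" if "a \<in> hahn" "b \<in> hahn" "vgt b a" for a b
  proof -
    have a: "a \<noteq> hzero" using that vgt_nz by blast
    have ay: "hmul a y \<noteq> hzero" "hval (hmul a y) = hval a + hval y" using hmul_val that(1) a y by blast+
    show ?thesis
    proof (cases "b = hzero")
      case True then show ?thesis using ay vgt_zero by simp
    next
      case False
      have "hval b + hval y = hval (hmul b y)" using hmul_val that(2) False y by metis
      moreover have "hval a < hval b" using that(3) False unfolding vgt_def by simp
      ultimately have "hval (hmul a y) < hval (hmul b y)" using ay by (metis add_strict_right_mono)
      then show ?thesis using ay unfolding vgt_def by simp
    qed
  qed
  show "hval (hmul a y) \<le> hval (hmul b y)"
    if "a \<in> hahn" "b \<in> hahn" "a \<noteq> hzero" "b \<noteq> hzero" "hval a \<le> hval b" for a b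
  proof -
    have "hval (hmul a y) = hval a + hval y" "hval (hmul b y) = hval b + hval y"
      using hmul_val that y by blast+
    then show ?thesis using that(5) by (simp add: add_right_mono)
  qed
  show "x \<in> hahn" by fact
  show "\<exists>d\<in>hahn. vgt (hminus (hminus x (hmul z y)) (hmul d y)) (hminus x (hmul z y))"
    if z: "z \<in> hahn" "hminus x (hmul z y) \<noteq> hzero" for z
  proof -
    define e where "e = hminus x (hmul z y)"
    have e: "e \<in> hahn" "e \<noteq> hzero"
      unfolding e_def using hminus_hahn[OF x hmul_hahn[OF z(1) y(1)]] z(2) by auto
    define \<gamma> where "\<gamma> = hval e - hval y"
    define c where "c = e (hval e) / y (hval y)"
    define d where "d = (\<lambda>g. if g = \<gamma> then c else (0::'k))"
    have dh: "d \<in> hahn" unfolding d_def by (rule mono_hahn)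
    have dy: "hmul d y = (\<lambda>g. c * y (g - \<gamma>))" unfolding d_def by (rule hmul_mono)
    have ey: "e (hval e) \<noteq> 0" "y (hval y) \<noteq> 0" using hval_props(1)[OF e] hval_props(1)[OF y] by auto
    have "\<forall>g \<le> hval e. hminus e (hmul d y) g = 0"
    proof (intro allI impI)
      fix g assume g: "g \<le> hval e"
      show "hminus e (hmul d y) g = 0"
      proof (cases "g = hval e")
        case True
        then have "g - \<gamma> = hval y" unfolding \<gamma>_def by simp
        then show ?thesis using True ey unfolding dy c_def by simp
      next
        case False
        then have lt: "g < hval e" using g by simp
        then have "g - \<gamma> < hval y" unfolding \<gamma>_def by (simp add: algebra_simps)
        then have "y (g - \<gamma>) = 0" using below_hval y(1) by blast
        moreover have "e g = 0" using below_hval e(1) lt by blast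
        ultimately show ?thesis unfolding dy by simp
      qed
    qed
    moreover have "hminus e (hmul d y) \<in> hahn" using hminus_hahn[OF e(1) hmul_hahn[OF dh y(1)]] .
    ultimately have "vgt (hminus e (hmul d y)) e"
      using vgt_iff[of "hminus e (hmul d y)" e] e by blast
    then show ?thesis using dh unfolding e_def by blast
  qed
qed

lemma hmul_cancel:
  assumes "z1 \<in> hahn" "z2 \<in> hahn" "y \<in> hahn" "y \<noteq> hzero" "hmul z1 y = hmul z2 y"
  shows "z1 = z2"
proof (rule ccontr)
  assume "z1 \<noteq> z2"
  then have ne: "hminus z1 z2 \<noteq> hzero" by (simp add: nz_iff fun_eq_iff)
  have "hmul (hminus z1 z2) y = hminus (hmul z1 y) (hmul z2 y)" using hmul_hminus_left assms by blast
  also have "\<dots> = hzero" using assms(5) by (simp add: fun_eq_iff)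
  finally show False using hmul_val[OF hminus_hahn[OF assms(1,2)] assms(3) ne assms(4)] by simp
qed

lemma hdiv_spec:
  assumes "x \<in> hahn" "y \<in> hahn" "y \<noteq> hzero"
  shows "hdiv x y \<in> hahn" "hmul (hdiv x y) y = x"
proof -
  have "\<exists>!z. z \<in> hahn \<and> hmul z y = x"
    using hdiv_exists[OF assms] hmul_cancel assms by metis
  then have "hdiv x y \<in> hahn \<and> hmul (hdiv x y) y = x"
    unfolding hdiv_def by (rule theI')
  then show "hdiv x y \<in> hahn" "hmul (hdiv x y) y = x" by auto
qed


lemma grp1: "a + b = c + d \<Longrightarrow> d < a + e \<Longrightarrow> b < c + (e::'a::linordered_ab_group_add)"
  by (metis add.commute add.left_commute add_less_cancel_left)
lemma grp2: "(hX::'a::linordered_ab_group_add) + hx = 0 \<Longrightarrow> hx < 0 \<Longrightarrow> 0 < hX"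
  by (metis add_less_same_cancel1 less_asym' linorder_neqE_linordered_idom)
lemma grp3: "(hw::'a::linordered_ab_group_add) + hx = hy \<Longrightarrow> hx < hy \<Longrightarrow> 0 < hw"
  by (metis less_add_same_cancel2)

lemma hval_neg: "hval (\<lambda>g. - f g) = hval f"
  unfolding hval_def by simp

lemma hval_scale: "(c::'k::field) \<noteq> 0 \<Longrightarrow> hval (\<lambda>g. c * f g) = hval (f::'g::linordered_ab_group_add \<Rightarrow> 'k)"
  unfolding hval_def by simp

lemma hconst_val: "c \<noteq> 0 \<Longrightarrow> hval (hconst c) = 0"
  by (rule hval_eqI) (auto simp: hconst_def)

lemma hconst_zero: "hconst 0 = hzero"
  unfolding hconst_def hzero_def by auto

context
  fixes D :: "('g::linordered_ab_group_add \<Rightarrow> 'k::field) \<Rightarrow> ('g \<Rightarrow> 'k)"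
  assumes der: "is_derivation D"
    and cst: "constants D = range hconst"
    and dv: "differential_valuation D"
    and ai: "asymptotic_integration D"
begin

lemma Dh: "a \<in> hahn \<Longrightarrow> D a \<in> hahn"
  using der unfolding is_derivation_def by blast

lemma Dadd: "a \<in> hahn \<Longrightarrow> b \<in> hahn \<Longrightarrow> D (hadd a b) = hadd (D a) (D b)"
  using der unfolding is_derivation_def by blast

lemma Dmul: "a \<in> hahn \<Longrightarrow> b \<in> hahn \<Longrightarrow> D (hmul a b) = hadd (hmul a (D b)) (hmul b (D a))"
  using der unfolding is_derivation_def by blast

lemma Dconst: "D (hconst c) = hzero"
proof -
  have "hconst c \<in> constants D" using cst by simp
  then show ?thesis unfolding constants_def by simp
qed

lemma Dzero: "D hzero = hzero"
  using Dconst[of 0] unfolding hconst_zero .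

lemma Dminus: "a \<in> hahn \<Longrightarrow> b \<in> hahn \<Longrightarrow> D (hminus a b) = hminus (D a) (D b)"
proof -
  assume ab: "a \<in> hahn" "b \<in> hahn"
  have "hadd (hminus a b) b = a" by (rule ext) simp
  moreover have "D (hadd (hminus a b) b) = hadd (D (hminus a b)) (D b)"
    using Dadd[OF hminus_hahn[OF ab] ab(2)] .
  ultimately have "D a = hadd (D (hminus a b)) (D b)" by simp
  then show ?thesis by (simp add: fun_eq_iff eq_diff_eq)
qed

lemma nonconst: "a \<in> hahn \<Longrightarrow> a \<noteq> hzero \<Longrightarrow> hval a \<noteq> 0 \<Longrightarrow> D a \<noteq> hzero"
proof
  assume a: "a \<in> hahn" "a \<noteq> hzero" "hval a \<noteq> 0" "D a = hzero"
  then have "a \<in> constants D" unfolding constants_def by simp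
  then obtain c where c: "a = hconst c" using cst by auto
  then have "c \<noteq> 0" using a(2) hconst_zero by auto
  then show False using hconst_val c a(3) by metis
qed

lemma axiom:
  assumes a: "a \<in> hahn" "vnonneg a" and b: "b \<in> hahn" "b \<noteq> hzero" "vpos b"
  shows "vgt (hmul b (D a)) (D b)"
proof -
  have hb: "0 < hval b" using b unfolding vpos_def by simp
  have Db: "D b \<noteq> hzero" "D b \<in> hahn" using nonconst[OF b(1,2)] hb Dh b by auto
  have bDa: "hmul b (D a) \<in> hahn" using hmul_hahn b Dh a by blast
  define q where "q = hdiv (hmul b (D a)) (D b)"
  have q: "q \<in> hahn" "hmul q (D b) = hmul b (D a)" using hdiv_spec[OF bDa Db(2,1)] q_def by auto
  have "vpos q" using dv a b unfolding differential_valuation_def q_def by blast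
  show ?thesis
  proof (cases "q = hzero")
    case True
    then show ?thesis using q(2) Db vgt_zero by (metis hmul_zero_left)
  next
    case False
    then have "0 < hval q" using \<open>vpos q\<close> unfolding vpos_def by simp
    moreover have "hmul q (D b) \<noteq> hzero" "hval (hmul q (D b)) = hval q + hval (D b)"
      using hmul_val[OF q(1) Db(2) False Db(1)] by auto
    ultimately show ?thesis using q(2) Db(1) unfolding vgt_def
      by (metis add_strict_right_mono add_0)
  qed
qed

definition SS :: "('g \<Rightarrow> 'k) set" where "SS = {a \<in> hahn. a 0 = 0}"

lemma S_val: "x \<in> SS \<Longrightarrow> x \<noteq> hzero \<Longrightarrow> hval x \<noteq> 0"
  unfolding SS_def using hval_props(1) by fastforce

lemma strict:
  assumes x: "x \<in> SS" and y: "y \<in> SS" and xy: "vgt y x"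
  shows "vgt (D y) (D x)"
proof -
  have xh: "x \<in> hahn" "y \<in> hahn" using x y SS_def by auto
  have xnz: "x \<noteq> hzero" using xy vgt_nz by blast
  have vx: "hval x \<noteq> 0" using S_val x xnz by blast
  have Dx: "D x \<noteq> hzero" "D x \<in> hahn" using nonconst xh xnz vx Dh by auto
  show ?thesis
  proof (cases "y = hzero")
    case True
    then show ?thesis using Dzero Dx vgt_zero by simp
  next
    case False
    have lt: "hval x < hval y" using xy False unfolding vgt_def by simp
    define w where "w = hdiv y x"
    have w: "w \<in> hahn" "hmul w x = y" using hdiv_spec[OF xh(2) xh(1) xnz] w_def by auto
    have wnz: "w \<noteq> hzero" using w False by auto
    have "hval (hmul w x) = hval w + hval x" using hmul_val w(1) xh(1) wnz xnz by blast
    then have "hval w + hval x = hval y" using w by simp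
    then have vw: "0 < hval w" using lt grp3 by blast
    have Dw: "D w \<noteq> hzero" "D w \<in> hahn" using nonconst[OF w(1) wnz] vw Dh w by auto
    have Dy: "D y = hadd (hmul w (D x)) (hmul x (D w))" using Dmul[OF w(1) xh(1)] w by simp
    have T1: "vgt (hmul w (D x)) (D x)"
    proof -
      have "hval (hmul w (D x)) = hval w + hval (D x)" using hmul_val w(1) Dx wnz by blast
      moreover have "hval (D x) < hval w + hval (D x)" using vw by (metis add_strict_right_mono add_0)
      ultimately show ?thesis using Dx unfolding vgt_def by simp
    qed
    have T2: "vgt (hmul x (D w)) (D x)"
    proof (cases "0 < hval x")
      case True
      show ?thesis
        using axiom[of w x] w(1) vw True xh(1) xnz less_imp_le unfolding vnonneg_def vpos_def by blast
    next
      case False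
      then have xneg: "hval x < 0" using vx by simp
      define X where "X = hdiv (hconst 1) x"
      have X: "X \<in> hahn" "hmul X x = hconst 1"
        using hdiv_spec[OF hconst_hahn xh(1) xnz] X_def by auto
      have Xnz: "X \<noteq> hzero"
      proof
        assume "X = hzero"
        then have "hconst 1 = (hzero :: 'g \<Rightarrow> 'k)" using X by simp
        then show False unfolding hconst_def hzero_def by (metis one_neq_zero)
      qed
      have "hval (hmul X x) = hval X + hval x" using hmul_val X(1) xh(1) Xnz xnz by blast
      moreover have "hval (hconst (1::'k) :: 'g \<Rightarrow> 'k) = 0" by (rule hconst_val) simp
      ultimately have "hval X + hval x = 0" using X by simp
      then have vX: "0 < hval X" using xneg grp2 by blast
      have DX: "D X \<noteq> hzero" "D X \<in> hahn" using nonconst[OF X(1) Xnz] vX Dh X by auto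
      have "hadd (hmul X (D x)) (hmul x (D X)) = hzero"
        using Dmul[OF X(1) xh(1)] X Dconst by simp
      then have "hmul X (D x) = (\<lambda>g. - hmul x (D X) g)"
        by (simp add: fun_eq_iff eq_neg_iff_add_eq_0)
      then have "hval (hmul X (D x)) = hval (hmul x (D X))" using hval_neg by metis
      moreover have "hval (hmul X (D x)) = hval X + hval (D x)" using hmul_val X(1) Dx Xnz by blast
      moreover have "hval (hmul x (D X)) = hval x + hval (D X)" using hmul_val xh(1) DX xnz by blast
      ultimately have E1: "hval X + hval (D x) = hval x + hval (D X)" by simp
      have "vgt (hmul X (D w)) (D X)"
        using axiom[of w X] w(1) vw X(1) Xnz vX less_imp_le unfolding vnonneg_def vpos_def by blast
      moreover have "hmul X (D w) \<noteq> hzero" "hval (hmul X (D w)) = hval X + hval (D w)"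
        using hmul_val X(1) Dw Xnz by blast+
      ultimately have E2: "hval (D X) < hval X + hval (D w)" unfolding vgt_def by simp
      have "hval (D x) < hval x + hval (D w)" using grp1[OF E1 E2] .
      moreover have "hval (hmul x (D w)) = hval x + hval (D w)" using hmul_val xh(1) Dw xnz by blast
      ultimately show ?thesis using Dx unfolding vgt_def by simp
    qed
    have "vgt (hadd (hmul w (D x)) (hmul x (D w))) (D x)"
      using vgt_hadd[OF hmul_hahn[OF w(1) Dx(2)] hmul_hahn[OF xh(1) Dw(2)] Dx(2) T1 T2] .
    then show ?thesis using Dy by simp
  qed
qed

lemma weak:
  assumes x: "x \<in> SS" and y: "y \<in> SS" and nz: "x \<noteq> hzero" "y \<noteq> hzero"
    and le: "hval x \<le> hval y"
  shows "hval (D x) \<le> hval (D y)"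
proof (cases "hval x < hval y")
  case True
  then have "vgt y x" using nz unfolding vgt_def by simp
  then have "vgt (D y) (D x)" using strict x y by blast
  moreover have "D y \<noteq> hzero" using nonconst nz S_val y SS_def by auto
  ultimately show ?thesis unfolding vgt_def using less_imp_le by blast
next
  case False
  then have eq: "hval x = hval y" using le by simp
  have xh: "x \<in> hahn" "y \<in> hahn" using x y SS_def by auto
  have x0: "x (hval x) \<noteq> 0" "y (hval y) \<noteq> 0" using hval_props(1) xh nz by blast+
  define c where "c = x (hval x) / y (hval y)"
  have c: "c \<noteq> 0" using x0 c_def by simp
  define cy where "cy = hmul (hconst c) y"
  have cy: "cy = (\<lambda>g. c * y g)" unfolding cy_def by (rule hmul_hconst)
  have cyh: "cy \<in> hahn" using hmul_hahn[OF hconst_hahn xh(2)] cy_def by simp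
  have cyS: "cy \<in> SS" using cyh cy y unfolding SS_def by simp
  define r where "r = hminus x cy"
  have rS: "r \<in> SS" using x cyS hminus_hahn unfolding r_def SS_def by auto
  have Dy: "D y \<noteq> hzero" "D y \<in> hahn" using nonconst nz S_val y SS_def Dh by auto
  have Dcy: "D cy = (\<lambda>g. c * D y g)"
  proof -
    have "D cy = hadd (hmul (hconst c) (D y)) (hmul y (D (hconst c)))"
      unfolding cy_def using Dmul[OF hconst_hahn xh(2)] .
    then show ?thesis using Dconst hmul_hconst by (simp add: fun_eq_iff)
  qed
  have Dcyh1: "D cy \<in> hahn" using Dh cyh by blast
  have Dcyh2: "D cy \<noteq> hzero" using Dy(1) c unfolding Dcy nz_iff by auto
  have Dcyh3: "hval (D cy) = hval (D y)" unfolding Dcy using hval_scale c by blast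
  note Dcyh = Dcyh1 Dcyh2 Dcyh3
  have xdec: "x = hadd cy r" unfolding r_def by (rule ext) simp
  have Dx: "D x = hadd (D cy) (D r)" using xdec Dadd cyh rS SS_def by (metis (mono_tags, lifting) mem_Collect_eq)
  show ?thesis
  proof (cases "r = hzero")
    case True
    then have "D r = hzero" using Dzero by simp
    then have "D x = D cy" using Dx by (simp add: fun_eq_iff)
    then show ?thesis using Dcyh by simp
  next
    case rnz: False
    have "\<forall>g \<le> hval y. r g = 0"
    proof (intro allI impI)
      fix g assume g: "g \<le> hval y"
      show "r g = 0"
      proof (cases "g = hval y")
        case True then show ?thesis using x0 eq unfolding r_def cy c_def by simp
      next
        case False then have "g < hval y" using g by simp
        then have "x g = 0" "y g = 0" using below_hval xh eq by metis+
        then show ?thesis unfolding r_def cy by simp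
      qed
    qed
    then have "vgt r y" using vgt_iff[of r y] rS SS_def xh nz by auto
    then have "vgt (D r) (D y)" using strict y rS by blast
    then have "vgt (D r) (D cy)" using vgt_cong Dcyh by metis
    then have "hval (hadd (D cy) (D r)) = hval (D cy)"
    proof -
      have "D r \<in> hahn" using Dh rS SS_def by auto
      then show ?thesis using hval_hadd_vgt(2)[OF Dcyh(1) _ \<open>vgt (D r) (D cy)\<close>] by blast
    qed
    then show ?thesis using Dx Dcyh by simp
  qed
qed

lemma surj_S: "b \<in> hahn \<Longrightarrow> \<exists>s\<in>SS. D s = b"
proof (rule approx_solve[where T = SS and L = D])
  show "SS \<subseteq> hahn" unfolding SS_def by auto
  show "hzero \<in> SS" unfolding SS_def by simp
  show "\<And>a b. a \<in> SS \<Longrightarrow> b \<in> SS \<Longrightarrow> hadd a b \<in> SS" unfolding SS_def using hadd_hahn by auto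
  show "\<And>a b. a \<in> SS \<Longrightarrow> b \<in> SS \<Longrightarrow> hminus a b \<in> SS" unfolding SS_def using hminus_hahn by auto
  show "f \<in> SS" if "f \<in> hahn" "\<And>g. f g \<noteq> 0 \<Longrightarrow> \<exists>z\<in>SS. f g = z g" for f
    using that unfolding SS_def by fastforce
  show "\<And>a. a \<in> SS \<Longrightarrow> D a \<in> hahn" using Dh SS_def by auto
  show "\<And>a b. a \<in> SS \<Longrightarrow> b \<in> SS \<Longrightarrow> D (hadd a b) = hadd (D a) (D b)" using Dadd SS_def by auto
  show "\<And>a b. a \<in> SS \<Longrightarrow> b \<in> SS \<Longrightarrow> vgt b a \<Longrightarrow> vgt (D b) (D a)" using strict by blast
  show "\<And>a b. a \<in> SS \<Longrightarrow> b \<in> SS \<Longrightarrow> a \<noteq> hzero \<Longrightarrow> b \<noteq> hzero \<Longrightarrow> hval a \<le> hval b \<Longrightarrow>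
          hval (D a) \<le> hval (D b)" using weak by blast
  assume b: "b \<in> hahn"
  then show "b \<in> hahn" .
  show "\<exists>d\<in>SS. vgt (hminus (hminus b (D z)) (D d)) (hminus b (D z))"
    if z: "z \<in> SS" "hminus b (D z) \<noteq> hzero" for z
  proof -
    have "hminus b (D z) \<in> hahn" using hminus_hahn b Dh z SS_def by auto
    then obtain a where a: "a \<in> hahn" "vgt (hminus (hminus b (D z)) (D a)) (hminus b (D z))"
      using ai z(2) unfolding asymptotic_integration_def by blast
    define d where "d = hminus a (hconst (a 0))"
    have dS: "d \<in> SS" unfolding d_def SS_def using hminus_hahn[OF a(1) hconst_hahn] by (simp add: hconst_def)
    have "D d = D a" unfolding d_def using Dminus[OF a(1) hconst_hahn] Dconst by (simp add: fun_eq_iff)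
    then show ?thesis using dS a(2) by (intro bexI[of _ d]) simp_all
  qed
qed

lemma inj_S: "s1 \<in> SS \<Longrightarrow> s2 \<in> SS \<Longrightarrow> D s1 = D s2 \<Longrightarrow> s1 = s2"
proof -
  assume s: "s1 \<in> SS" "s2 \<in> SS" "D s1 = D s2"
  have h: "s1 \<in> hahn" "s2 \<in> hahn" using s SS_def by auto
  have "D (hminus s1 s2) = hzero" using Dminus[OF h] s(3) by (simp add: fun_eq_iff)
  then have "hminus s1 s2 \<in> constants D" unfolding constants_def using hminus_hahn[OF h] by simp
  then obtain c where c: "hminus s1 s2 = hconst c" using cst by auto
  have "c = 0" using fun_cong[OF c, of 0] s unfolding SS_def hconst_def by simp
  then have "\<forall>g. s1 g - s2 g = 0" using c unfolding hconst_def by (simp add: fun_eq_iff)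
  then show "s1 = s2" by (simp add: fun_eq_iff)
qed

lemma main_result:
  shows "(\<forall>b\<in>hahn. \<exists>!s. s \<in> {a \<in> hahn. a 0 = 0} \<and> D s = b)
       \<and> bij_betw D {a \<in> hahn. a 0 = 0} hahn"
proof -
  have SSe: "{a \<in> hahn. a 0 = 0} = SS" unfolding SS_def by simp
  have 1: "\<forall>b\<in>hahn. \<exists>!s. s \<in> SS \<and> D s = b"
    using surj_S inj_S by metis
  have "inj_on D SS" using inj_S by (meson inj_onI)
  moreover have "D ` SS = hahn"
  proof
    show "D ` SS \<subseteq> hahn" using Dh SS_def by auto
    show "hahn \<subseteq> D ` SS" using surj_S by fastforce
  qed
  ultimately have "bij_betw D SS hahn" unfolding bij_betw_def by simp
  then show ?thesis using 1 SSe by simp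
qed

end

theorem mainTheorem7:
  fixes D :: "('g::linordered_ab_group_add \<Rightarrow> 'k::field) \<Rightarrow> ('g \<Rightarrow> 'k)"
  assumes "is_derivation D"
    and "constants D = range hconst"
    and "differential_valuation D"
    and "asymptotic_integration D"
  shows "(\<forall>b\<in>hahn. \<exists>!s. s \<in> {a \<in> hahn. a 0 = 0} \<and> D s = b)
       \<and> bij_betw D {a \<in> hahn. a 0 = 0} hahn"
  using main_result[OF assms] .

end
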